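(* Consider the Best-or-Worst secretary problem with $n\ge1$ candidates. Then there exists an integer $r(n)$ with $0\le r(n)\le n$ such that the following strategy is optimal (maximizes the probability of success among all strategies): reject the first $r(n)$ interviewed candidates; after that, accept the first candidate which is either better than all the preceding candidates or worse than all the preceding candidates.
   Context: Setting (secretary-type problem): $n$ candidates have distinct qualities (a strict total order) and are interviewed one at a time in uniformly random order (all $n!$ orders equally likely). After the $k$-th interview, the interviewer knows only the relative ranks of the first $k$ candidates among themselves and must immediately and irrevocably either accept the $k$-th candidate (stopping the process) or reject it; rejected candidates cannot be recalled. A strategy is a rule that makes this decision at each step using only the relative ranks observed so far (it may end up accepting nobody). In the Best-or-Worst problem, the strategy succeeds if the accepted candidate is either the overall best or the overall worst of all $n$ candidates (the two outcomes are equally valued); a strategy is optimal if it maximizes the probability of success. *)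

theory Defs
  imports Complex_Main "HOL-Combinatorics.Permutations"
begin

text \<open>An arrival order is a permutation sigma of {..<n}: the candidate interviewed
  at (0-based) position i has quality sigma i; larger means better, so
  n - 1 is the overall best and 0 the overall worst.\<close>

definition rel_obs :: "(nat \<Rightarrow> nat) \<Rightarrow> nat \<Rightarrow> nat \<Rightarrow> nat \<Rightarrow> bool" where
  "rel_obs \<sigma> k = (\<lambda>i j. i < k \<and> j < k \<and> \<sigma> i < \<sigma> j)"

text \<open>A strategy: at step k (1-based), given the observed relative order of the
  first k candidates, decide whether to accept the k-th candidate.\<close>
type_synonym strategy = "nat \<Rightarrow> (nat \<Rightarrow> nat \<Rightarrow> bool) \<Rightarrow> bool"

definition bow_success :: "nat \<Rightarrow> strategy \<Rightarrow> (nat \<Rightarrow> nat) \<Rightarrow> bool" where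
  "bow_success n S \<sigma> =
     (\<exists>k\<in>{1..n}. S k (rel_obs \<sigma> k) \<and> (\<forall>j\<in>{1..<k}. \<not> S j (rel_obs \<sigma> j)) \<and>
        (\<sigma> (k - 1) = 0 \<or> \<sigma> (k - 1) = n - 1))"

definition success_prob :: "nat \<Rightarrow> strategy \<Rightarrow> real" where
  "success_prob n S =
     real (card {\<sigma>. \<sigma> permutes {..<n} \<and> bow_success n S \<sigma>}) /
     real (card {\<sigma>. \<sigma> permutes {..<n}})"

definition threshold_strategy :: "nat \<Rightarrow> strategy" where
  "threshold_strategy r k obs =
     (r < k \<and> ((\<forall>i<k - 1. obs i (k - 1)) \<or> (\<forall>i<k - 1. obs (k - 1) i)))"

end

theory Submission
  imports Defs
begin


definition LL :: "nat \<Rightarrow> nat \<Rightarrow> nat list set" where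
  "LL n m = {xs. length xs = n - m \<and> (\<forall>i<length xs. xs!i \<le> m + i)}"

definition win :: "nat \<Rightarrow> nat \<Rightarrow> nat list \<Rightarrow> bool" where
  "win m x ys = ((x = m \<and> (\<forall>j<length ys. ys!j \<noteq> Suc m + j)) \<or> (x = 0 \<and> (\<forall>j<length ys. ys!j \<noteq> 0)))"

fun bsucc :: "nat \<Rightarrow> (nat list \<Rightarrow> bool) \<Rightarrow> nat list \<Rightarrow> bool" where
  "bsucc m D [] = False"
| "bsucc m D (x#xs) = (if D [x] then win m x xs else bsucc (Suc m) (\<lambda>ys. D (x#ys)) xs)"

lemma finite_LL: "finite (LL n m)"
proof -
  have "LL n m \<subseteq> {xs. set xs \<subseteq> {..n} \<and> length xs = n - m}"
    by (auto simp: LL_def in_set_conv_nth) (metis add.commute le_trans less_diff_conv less_or_eq_imp_le)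
  then show ?thesis using finite_lists_length_eq[of "{..n}" "n-m"] finite_subset by auto
qed

lemma LL_nn: "LL n n = {[]}"
  by (auto simp: LL_def)

lemma LL_split:
  assumes "m < n"
  shows "{xs \<in> LL n m. P xs} = (\<Union>x\<in>{..m}. (\<lambda>ys. x#ys) ` {ys \<in> LL n (Suc m). P (x#ys)})"
proof (rule set_eqI)
  fix xs show "xs \<in> {xs \<in> LL n m. P xs} \<longleftrightarrow> xs \<in> (\<Union>x\<in>{..m}. (\<lambda>ys. x#ys) ` {ys \<in> LL n (Suc m). P (x#ys)})"
  proof
    assume h: "xs \<in> {xs \<in> LL n m. P xs}"
    then obtain x ys where xs: "xs = x#ys" using assms by (cases xs) (auto simp: LL_def)
    have "x \<le> m" using h xs by (auto simp: LL_def)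
    moreover have "ys \<in> LL n (Suc m)"
      using h xs unfolding LL_def by auto
    ultimately show "xs \<in> (\<Union>x\<in>{..m}. (\<lambda>ys. x#ys) ` {ys \<in> LL n (Suc m). P (x#ys)})"
      using h xs by auto
  next
    assume "xs \<in> (\<Union>x\<in>{..m}. (\<lambda>ys. x#ys) ` {ys \<in> LL n (Suc m). P (x#ys)})"
    then obtain x ys where xs: "xs = x#ys" "x \<le> m" "ys \<in> LL n (Suc m)" "P (x#ys)" by auto
    have "\<forall>i<length xs. xs!i \<le> m + i"
    proof (intro allI impI)
      fix i assume "i < length xs"
      then show "xs!i \<le> m + i" using xs unfolding LL_def by (cases i) auto
    qed
    then show "xs \<in> {xs \<in> LL n m. P xs}" using xs assms by (auto simp: LL_def)
  qed
qed

lemma card_LL_split: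
  assumes "m < n"
  shows "card {xs \<in> LL n m. P xs} = (\<Sum>x\<le>m. card {ys \<in> LL n (Suc m). P (x#ys)})"
proof -
  have "card {xs \<in> LL n m. P xs} = card (\<Union>x\<in>{..m}. (\<lambda>ys. x#ys) ` {ys \<in> LL n (Suc m). P (x#ys)})"
    using LL_split[OF assms] by simp
  also have "\<dots> = (\<Sum>x\<le>m. card ((\<lambda>ys. x#ys) ` {ys \<in> LL n (Suc m). P (x#ys)}))"
    by (rule card_UN_disjoint) (auto intro: finite_subset[OF _ finite_LL])
  also have "\<dots> = (\<Sum>x\<le>m. card {ys \<in> LL n (Suc m). P (x#ys)})"
    by (rule sum.cong) (auto intro: card_image simp: inj_on_def)
  finally show ?thesis .
qed

lemma card_LL_prod:
  assumes "k \<le> n"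
  shows "card {ys \<in> LL n k. \<forall>j<length ys. P (k+j) (ys!j)} = (\<Prod>j\<in>{k..<n}. card {v. v \<le> j \<and> P j v})"
  using assms
proof (induction "n - k" arbitrary: k)
  case 0
  then have "k = n" by simp
  then have "LL n k = {[]}" by (simp add: LL_nn)
  have "{ys \<in> LL n k. \<forall>j<length ys. P (k+j) (ys!j)} = {[]}"
  proof (rule set_eqI)
    fix ys show "ys \<in> {ys \<in> LL n k. \<forall>j<length ys. P (k+j) (ys!j)} \<longleftrightarrow> ys \<in> {[]}"
      unfolding \<open>LL n k = {[]}\<close> by (cases ys) simp_all
  qed
  then show ?case using \<open>k = n\<close> by simp
next
  case (Suc d)
  then have kn: "k < n" by simp
  have IH: "card {ys \<in> LL n (Suc k). \<forall>j<length ys. P (Suc k+j) (ys!j)} = (\<Prod>j\<in>{Suc k..<n}. card {v. v \<le> j \<and> P j v})"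
    using Suc using Suc.hyps(1)[of "Suc k"] Suc.hyps(2) kn by simp
  have eq: "\<And>x ys. (\<forall>j<length (x#ys). P (k+j) ((x#ys)!j)) = (P k x \<and> (\<forall>j<length ys. P (Suc k+j) (ys!j)))"
    by (auto simp: less_Suc_eq_0_disj)
  have "card {ys \<in> LL n k. \<forall>j<length ys. P (k+j) (ys!j)} =
     (\<Sum>x\<le>k. card {ys \<in> LL n (Suc k). P k x \<and> (\<forall>j<length ys. P (Suc k+j) (ys!j))})"
    unfolding card_LL_split[OF kn] eq ..
  also have "\<dots> = (\<Sum>x\<le>k. if P k x then card {ys \<in> LL n (Suc k). \<forall>j<length ys. P (Suc k+j) (ys!j)} else 0)"
    by (rule sum.cong) auto
  also have "\<dots> = card {v. v \<le> k \<and> P k v} * card {ys \<in> LL n (Suc k). \<forall>j<length ys. P (Suc k+j) (ys!j)}"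
    by (simp add: sum.If_cases Int_def atMost_def)
  also have "\<dots> = (\<Prod>j\<in>{k..<n}. card {v. v \<le> j \<and> P j v})"
    using IH kn by (simp add: prod.atLeast_Suc_lessThan)
  finally show ?case .
qed

lemma card_LL: "k \<le> n \<Longrightarrow> card (LL n k) = (\<Prod>j\<in>{k..<n}. Suc j)"
  using card_LL_prod[of k n "\<lambda>_ _. True"] by simp

lemma telescope: "k \<le> n \<Longrightarrow> (\<Prod>j\<in>{k..<n}. j) * n = k * (\<Prod>j\<in>{k..<n}. Suc j)"
proof (induction n)
  case 0 then show ?case by simp
next
  case (Suc n)
  show ?case
  proof (cases "k = Suc n")
    case True then show ?thesis by simp
  next
    case False
    then have "k \<le> n" using Suc by simp
    then show ?thesis using Suc.IH by (simp add: prod.atLeastLessThan_Suc algebra_simps)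
  qed
qed




definition Uf :: "nat \<Rightarrow> nat \<Rightarrow> real" where
  "Uf n k = 2 * real k * (real n - real k) / (real n * (real n - 1))"

definition Bf :: "nat \<Rightarrow> nat \<Rightarrow> real" where
  "Bf n m = Uf n (max m (n div 2))"

lemma r_facts:
  assumes "n \<ge> 2"
  shows "2 * real (n div 2) \<le> real n" "real n \<le> 2 * real (n div 2) + 1" "1 \<le> n div 2" "n div 2 < n"
  using assms by linarith+

lemma Uf_nonneg: "n \<ge> 2 \<Longrightarrow> k \<le> n \<Longrightarrow> 0 \<le> Uf n k"
  unfolding Uf_def by (intro divide_nonneg_pos mult_nonneg_nonneg) auto

lemma Bf_nonneg: "n \<ge> 2 \<Longrightarrow> m \<le> n \<Longrightarrow> 0 \<le> Bf n m"
  unfolding Bf_def using r_facts[of n] by (intro Uf_nonneg) auto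

lemma U_ident:
  assumes "n \<ge> 2"
  shows "(real m - 1) * Uf n (Suc m) + 2 * (real m + 1) / real n = (real m + 1) * Uf n m"
proof -
  have n1: "real n - 1 > 0" "real n > 0" using assms by auto
  show ?thesis unfolding Uf_def using n1
    by (simp add: field_simps)
qed

lemma factA:
  assumes "n \<ge> 2" "n div 2 \<le> m" "Suc m \<le> n"
  shows "Uf n (Suc m) \<le> (real m + 1) / real n"
proof -
  let ?N = "real n" and ?M = "real m"
  have n1: "?N - 1 > 0" "?N > 0" using assms by auto
  have h: "?N \<le> 2 * ?M + 1" using r_facts(2)[OF assms(1)] assms(2) by linarith
  have "2 * (?M+1) * (?N - (?M+1)) \<le> (?M + 1) * (?N - 1)"
  proof -
    have "2 * (?N - (?M+1)) \<le> ?N - 1" using h by (simp add: algebra_simps)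
    then have "(?M+1) * (2 * (?N - (?M+1))) \<le> (?M + 1) * (?N - 1)"
      by (intro mult_left_mono) auto
    then show ?thesis by (simp add: algebra_simps)
  qed
  then have "2 * (?M+1) * (?N - (?M+1)) / (?N * (?N-1)) \<le> (?M + 1) * (?N - 1) / (?N * (?N-1))"
    by (rule divide_right_mono) (use n1 in auto)
  also have "\<dots> = (?M + 1) / ?N" using n1 by (simp add: field_simps)
  finally show ?thesis unfolding Uf_def by (simp add: algebra_simps)
qed

lemma factB:
  assumes "n \<ge> 2" "Suc m \<le> n div 2"
  shows "(real m + 1) / real n \<le> Uf n (n div 2)"
proof -
  let ?N = "real n" and ?M = "real m" and ?R = "real (n div 2)"
  have n1: "?N - 1 > 0" "?N > 0" using assms by auto
  note rf = r_facts[OF assms(1)]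
  have "(?M+1) * (?N - 1) \<le> ?R * (?N - 1)"
    using assms(2) n1 by (intro mult_right_mono) auto
  also have "\<dots> \<le> ?R * (2 * (?N - ?R))"
    using rf by (intro mult_left_mono) auto
  finally have le: "(?M+1) * (?N - 1) \<le> 2 * ?R * (?N - ?R)" by (simp add: algebra_simps)
  have "(?M + 1) / ?N = (?M+1) * (?N - 1) / (?N * (?N-1))" using n1 by (simp add: field_simps)
  also have "\<dots> \<le> 2 * ?R * (?N - ?R) / (?N * (?N-1))"
    by (rule divide_right_mono) (use le n1 in auto)
  finally show ?thesis unfolding Uf_def .
qed

lemma factC:
  assumes "n \<ge> 2"
  shows "2 / real n \<le> Uf n (n div 2)"
proof -
  let ?N = "real n" and ?R = "real (n div 2)"
  have n1: "?N - 1 > 0" "?N > 0" using assms by auto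
  note rf = r_facts[OF assms(1)]
  have "0 \<le> (?R - 1) * (?N - ?R - 1)"
    using rf by (intro mult_nonneg_nonneg) auto
  then have "?N - 1 \<le> ?R * (?N - ?R)" by (simp add: algebra_simps)
  then have le: "2 * (?N - 1) \<le> 2 * ?R * (?N - ?R)" by simp
  have "2 / ?N = (2*(?N-1)) / (?N*(?N-1))" using n1 by (simp add: field_simps)
  also have "\<dots> \<le> (2*?R*(?N-?R)) / (?N*(?N-1))"
    by (rule divide_right_mono) (use le n1 in auto)
  finally show ?thesis unfolding Uf_def .
qed

lemma ineq1:
  assumes "n \<ge> 2" "1 \<le> m" "m < n"
  shows "(real m + 1) * Bf n (Suc m) + 2 * (max ((real m + 1) / real n) (Bf n (Suc m)) - Bf n (Suc m))
         \<le> (real m + 1) * Bf n m"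
proof (cases "n div 2 \<le> m")
  case True
  then have b: "Bf n (Suc m) = Uf n (Suc m)" "Bf n m = Uf n m" unfolding Bf_def by auto
  have "max ((real m + 1) / real n) (Bf n (Suc m)) = (real m + 1) / real n"
    using factA[OF assms(1) True] assms b by auto
  then show ?thesis using U_ident[OF assms(1), of m] b by (simp add: algebra_simps)
next
  case False
  then have b: "Bf n (Suc m) = Uf n (n div 2)" "Bf n m = Uf n (n div 2)" unfolding Bf_def by auto
  have "max ((real m + 1) / real n) (Bf n (Suc m)) = Bf n (Suc m)"
    using factB[OF assms(1)] False b by auto
  then show ?thesis using b by simp
qed

lemma eq1:
  assumes "n \<ge> 2" "n div 2 \<le> m" "m < n"
  shows "(real m + 1) * Bf n (Suc m) + 2 * ((real m + 1) / real n - Bf n (Suc m)) = (real m + 1) * Bf n m"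
proof -
  have b: "Bf n (Suc m) = Uf n (Suc m)" "Bf n m = Uf n m" using assms unfolding Bf_def by auto
  show ?thesis using U_ident[OF assms(1), of m] b by (simp add: algebra_simps)
qed

lemma ineq0:
  assumes "n \<ge> 2"
  shows "max (2 / real n) (Bf n 1) \<le> Bf n 0"
  using factC[OF assms] r_facts[OF assms] unfolding Bf_def by auto




definition cw :: "nat \<Rightarrow> nat \<Rightarrow> nat \<Rightarrow> nat" where
  "cw n m x = card {ys \<in> LL n (Suc m). win m x ys}"

definition NN :: "nat \<Rightarrow> nat \<Rightarrow> real" where
  "NN n m = real (card (LL n m))"

lemma NN_Suc: "m < n \<Longrightarrow> NN n m = (real m + 1) * NN n (Suc m)"
proof -
  assume a: "m < n"
  have h: "card (LL n m) = Suc m * card (LL n (Suc m))" using card_LL[of m n] card_LL[of "Suc m" n] a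
    by (simp add: prod.atLeast_Suc_lessThan)
  have "real (card (LL n m)) = real (Suc m) * real (card (LL n (Suc m)))"
    by (simp only: of_nat_mult[symmetric] h)
  then show ?thesis unfolding NN_def by simp
qed

lemma NN_pos: "m \<le> n \<Longrightarrow> 0 < NN n m"
proof -
  assume a: "m \<le> n"
  have "0 < card (LL n m)" using card_LL[OF a] by (simp add: prod_pos)
  then show ?thesis unfolding NN_def by simp
qed

lemma card_lt: "card {v. v \<le> j \<and> v \<noteq> j} = (j::nat)"
proof -
  have "{v. v \<le> j \<and> v \<noteq> j} = {..<j}" by auto
  then show ?thesis by simp
qed

lemma card_ne0: "card {v. v \<le> j \<and> 0 < v} = (j::nat)"
proof -
  have "{v. v \<le> j \<and> 0 < v} = {1..j}" by auto
  then show ?thesis by simp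
qed

lemma cw_top:
  assumes "m < n"
  shows "card {ys \<in> LL n (Suc m). \<forall>j<length ys. ys!j \<noteq> Suc m + j} * n = Suc m * card (LL n (Suc m))"
proof -
  have "card {ys \<in> LL n (Suc m). \<forall>j<length ys. ys!j \<noteq> Suc m + j} = (\<Prod>j\<in>{Suc m..<n}. j)"
    using card_LL_prod[of "Suc m" n "\<lambda>j v. v \<noteq> j"] assms by (simp add: card_lt)
  then show ?thesis using telescope[of "Suc m" n] card_LL[of "Suc m" n] assms by simp
qed

lemma cw_bot:
  assumes "m < n"
  shows "card {ys \<in> LL n (Suc m). \<forall>j<length ys. ys!j \<noteq> 0} * n = Suc m * card (LL n (Suc m))"
proof -
  have "card {ys \<in> LL n (Suc m). \<forall>j<length ys. ys!j \<noteq> 0} = (\<Prod>j\<in>{Suc m..<n}. j)"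
    using card_LL_prod[of "Suc m" n "\<lambda>j v. v \<noteq> 0"] assms by (simp add: card_ne0)
  then show ?thesis using telescope[of "Suc m" n] card_LL[of "Suc m" n] assms by simp
qed

lemma cw_ext:
  assumes "m < n" "1 \<le> m" "x = m \<or> x = 0"
  shows "real (cw n m x) = (real m + 1) * NN n (Suc m) / real n"
proof -
  have n0: "real n > 0" using assms by simp
  have "cw n m x * n = Suc m * card (LL n (Suc m))"
  proof (cases "x = m")
    case True
    then have "x \<noteq> 0" using assms by simp
    then have "cw n m x = card {ys \<in> LL n (Suc m). \<forall>j<length ys. ys!j \<noteq> Suc m + j}"
      unfolding cw_def win_def using True by simp
    then show ?thesis using cw_top[OF assms(1)] by simp
  next
    case False
    then have "x = 0" using assms by simp
    then have "cw n m x = card {ys \<in> LL n (Suc m). \<forall>j<length ys. ys!j \<noteq> 0}"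
      unfolding cw_def win_def using False by simp
    then show ?thesis using cw_bot[OF assms(1)] by simp
  qed
  then have "real (cw n m x) * real n = (real m + 1) * NN n (Suc m)"
    unfolding NN_def by (metis of_nat_Suc of_nat_mult add.commute)
  then show ?thesis using n0 by (simp add: field_simps)
qed

lemma cw_other:
  assumes "x \<noteq> m" "x \<noteq> 0"
  shows "cw n m x = 0"
  unfolding cw_def win_def using assms by simp

lemma cw_00:
  assumes "2 \<le> n"
  shows "real (cw n 0 0) = 2 * NN n 1 / real n"
proof -
  have n0: "real n > 0" using assms by simp
  let ?A = "{ys \<in> LL n 1. \<forall>j<length ys. ys!j \<noteq> Suc 0 + j}"
  let ?B = "{ys \<in> LL n 1. \<forall>j<length ys. ys!j \<noteq> 0}"
  have eq: "{ys \<in> LL n 1. win 0 0 ys} = ?A \<union> ?B" unfolding win_def by (simp add: Collect_disj_eq conj_disj_distribL)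
  have dis: "?A \<inter> ?B = {}"
  proof (rule ccontr)
    assume "?A \<inter> ?B \<noteq> {}"
    then obtain ys where ys: "ys \<in> LL n 1" "\<forall>j<length ys. ys!j \<noteq> Suc 0 + j" "\<forall>j<length ys. ys!j \<noteq> 0" by blast
    have "length ys = n - 1" "ys!0 \<le> 1 + 0" using ys(1) assms unfolding LL_def by auto
    then have l: "0 < length ys" using assms by simp
    have "ys!0 \<noteq> 1" "ys!0 \<noteq> 0" using ys(2)[rule_format, OF l] ys(3)[rule_format, OF l] by auto
    then show False using \<open>ys!0 \<le> 1 + 0\<close> by linarith
  qed
  have "card (?A \<union> ?B) = card ?A + card ?B"
    by (rule card_Un_disjoint) (use dis in \<open>auto intro: finite_subset[OF _ finite_LL]\<close>)
  then have "cw n 0 0 = card ?A + card ?B"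
    unfolding cw_def using eq by simp
  then have "cw n 0 0 * n = 2 * card (LL n 1)"
    using cw_top[of 0 n] cw_bot[of 0 n] assms by (simp add: algebra_simps)
  then have "real (cw n 0 0) * real n = 2 * NN n 1"
    unfolding NN_def by (metis of_nat_mult of_nat_numeral)
  then show ?thesis using n0 by (simp add: field_simps)
qed

lemma step_count:
  assumes "m < n"
  shows "card {xs \<in> LL n m. bsucc m D xs} =
    (\<Sum>x\<le>m. if D [x] then cw n m x else card {ys \<in> LL n (Suc m). bsucc (Suc m) (\<lambda>ys. D (x#ys)) ys})"
  unfolding card_LL_split[OF assms] cw_def by (rule sum.cong) auto

lemma bsucc_cong: "(\<And>ys. ys \<noteq> [] \<Longrightarrow> D ys = D' ys) \<Longrightarrow> bsucc m D xs = bsucc m D' xs"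
proof (induction xs arbitrary: m D D')
  case Nil then show ?case by simp
next
  case (Cons x xs)
  have "bsucc (Suc m) (\<lambda>ys. D (x#ys)) xs = bsucc (Suc m) (\<lambda>ys. D' (x#ys)) xs"
    by (rule Cons.IH) (use Cons.prems in auto)
  then show ?case using Cons.prems[of "[x]"] by simp
qed




lemma max_mult_pos: "(0::real) < c \<Longrightarrow> max (a * c) (b * c) = max a b * c"
  by (cases "a \<le> b") (auto simp: max_def)

lemma sum_h:
  fixes F \<Delta> :: real
  assumes "1 \<le> m"
  shows "(\<Sum>x\<le>m. F + (if x = 0 then \<Delta> else 0) + (if x = m then \<Delta> else 0)) = (real m + 1) * F + 2 * \<Delta>"
proof -
  have "(\<Sum>x\<le>m. F + (if x = 0 then \<Delta> else 0) + (if x = m then \<Delta> else 0)) =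
     (\<Sum>x\<le>m. F) + (\<Sum>x\<le>m. (if x = 0 then \<Delta> else 0)) + (\<Sum>x\<le>m. (if x = m then \<Delta> else 0))"
    by (simp add: sum.distrib)
  also have "\<dots> = (real m + 1) * F + \<Delta> + \<Delta>"
    by (simp add: sum.delta)
  finally show ?thesis by simp
qed

lemma LL_n_empty: "{xs \<in> LL n n. bsucc n D xs} = {}"
  by (auto simp: LL_nn)

lemma bound:
  assumes "2 \<le> n" "m \<le> n"
  shows "real (card {xs \<in> LL n m. bsucc m D xs}) \<le> Bf n m * NN n m"
  using assms(2)
proof (induction "n - m" arbitrary: m D)
  case 0
  then have "m = n" by simp
  then show ?case using Bf_nonneg[OF assms(1), of n] NN_pos[of n n] by (simp add: LL_n_empty)
next
  case (Suc d)
  then have mn: "m < n" by simp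
  define F where "F = Bf n (Suc m) * NN n (Suc m)"
  have IH: "\<And>D'. real (card {ys \<in> LL n (Suc m). bsucc (Suc m) D' ys}) \<le> F"
    unfolding F_def using Suc.hyps(1)[of "Suc m"] Suc.hyps(2) mn by simp
  have N'pos: "0 < NN n (Suc m)" using NN_pos mn by simp
  have F0: "0 \<le> F" unfolding F_def using Bf_nonneg[OF assms(1), of "Suc m"] N'pos mn by simp
  define t where "t x = (if D [x] then cw n m x else card {ys \<in> LL n (Suc m). bsucc (Suc m) (\<lambda>ys. D (x#ys)) ys})" for x
  have cnt: "real (card {xs \<in> LL n m. bsucc m D xs}) = (\<Sum>x\<le>m. real (t x))"
    unfolding step_count[OF mn] t_def by simp
  show ?case
  proof (cases "m = 0")
    case True
    have "real (t 0) \<le> max (2 * NN n 1 / real n) F"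
      unfolding t_def using IH[of "\<lambda>ys. D (0 # ys)"] cw_00[OF assms(1)] True by (auto simp: le_max_iff_disj)
    also have "\<dots> = max (2 / real n) (Bf n 1) * NN n 1"
      unfolding F_def using max_mult_pos[OF N'pos, of "2 / real n" "Bf n 1"] True by simp
    also have "\<dots> \<le> Bf n 0 * NN n 1"
      using ineq0[OF assms(1)] N'pos True by (intro mult_right_mono) auto
    also have "\<dots> = Bf n 0 * NN n 0" using NN_Suc[of 0 n] mn by simp
    finally show ?thesis using cnt True by simp
  next
    case False
    then have m1: "1 \<le> m" by simp
    define E where "E = (real m + 1) * NN n (Suc m) / real n"
    define \<Delta> where "\<Delta> = max E F - F"
    have \<Delta>0: "0 \<le> \<Delta>" unfolding \<Delta>_def by simp
    have tle: "real (t x) \<le> F + (if x = 0 then \<Delta> else 0) + (if x = m then \<Delta> else 0)" if "x \<le> m" for x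
    proof (cases "D [x]")
      case True
      show ?thesis
      proof (cases "x = m \<or> x = 0")
        case True
        then have "real (t x) = E" unfolding t_def E_def using \<open>D [x]\<close> cw_ext[OF mn m1] by simp
        then show ?thesis using True \<Delta>0 m1 unfolding \<Delta>_def by auto
      next
        case False
        then show ?thesis unfolding t_def using \<open>D [x]\<close> cw_other F0 \<Delta>0 by auto
      qed
    next
      case False
      then show ?thesis unfolding t_def using IH[of "\<lambda>ys. D (x#ys)"] \<Delta>0 by auto
    qed
    have "(\<Sum>x\<le>m. real (t x)) \<le> (\<Sum>x\<le>m. F + (if x = 0 then \<Delta> else 0) + (if x = m then \<Delta> else 0))"
      by (rule sum_mono) (use tle in auto)
    also have "\<dots> = (real m + 1) * F + 2 * \<Delta>" by (rule sum_h[OF m1])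
    also have "\<dots> = ((real m + 1) * Bf n (Suc m) + 2 * (max ((real m + 1) / real n) (Bf n (Suc m)) - Bf n (Suc m))) * NN n (Suc m)"
    proof -
      have "max E F = max ((real m + 1) / real n) (Bf n (Suc m)) * NN n (Suc m)"
        unfolding E_def F_def using max_mult_pos[OF N'pos, of "(real m + 1) / real n" "Bf n (Suc m)"] by simp
      then show ?thesis unfolding \<Delta>_def F_def by (simp add: algebra_simps)
    qed
    also have "\<dots> \<le> ((real m + 1) * Bf n m) * NN n (Suc m)"
      using ineq1[OF assms(1) m1 mn] N'pos by (intro mult_right_mono) auto
    also have "\<dots> = Bf n m * NN n m" using NN_Suc[OF mn] by simp
    finally show ?thesis using cnt by simp
  qed
qed

definition thrD :: "nat \<Rightarrow> nat \<Rightarrow> nat list \<Rightarrow> bool" where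
  "thrD r m p = (r < m + length p \<and> (last p = m + length p - 1 \<or> last p = 0))"

lemma thrD_shift: "ys \<noteq> [] \<Longrightarrow> thrD r m (x#ys) = thrD r (Suc m) ys"
  unfolding thrD_def by auto

lemma tcount:
  assumes "2 \<le> n" "m \<le> n"
  shows "real (card {xs \<in> LL n m. bsucc m (thrD (n div 2) m) xs}) = Bf n m * NN n m"
  using assms(2)
proof (induction "n - m" arbitrary: m)
  case 0
  then have "m = n" by simp
  then show ?case by (simp add: LL_n_empty Bf_def Uf_def)
next
  case (Suc d)
  then have mn: "m < n" by simp
  define r where "r = n div 2"
  define F where "F = Bf n (Suc m) * NN n (Suc m)"
  have IH: "real (card {ys \<in> LL n (Suc m). bsucc (Suc m) (thrD r (Suc m)) ys}) = F"
    unfolding F_def r_def using Suc.hyps(1)[of "Suc m"] Suc.hyps(2) mn by simp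
  have N'pos: "0 < NN n (Suc m)" using NN_pos mn by simp
  define t where "t x = (if thrD r m [x] then cw n m x else card {ys \<in> LL n (Suc m). bsucc (Suc m) (\<lambda>ys. thrD r m (x#ys)) ys})" for x
  have cnt: "real (card {xs \<in> LL n m. bsucc m (thrD r m) xs}) = (\<Sum>x\<le>m. real (t x))"
    unfolding step_count[OF mn] t_def by simp
  have t2: "real (card {ys \<in> LL n (Suc m). bsucc (Suc m) (\<lambda>ys. thrD r m (x#ys)) ys}) = F" for x
  proof -
    have "bsucc (Suc m) (\<lambda>ys. thrD r m (x#ys)) ys = bsucc (Suc m) (thrD r (Suc m)) ys" for ys
      by (rule bsucc_cong) (simp add: thrD_shift)
    then show ?thesis using IH by simp
  qed
  have thr1: "thrD r m [x] = (r \<le> m \<and> (x = m \<or> x = 0))" for x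
    unfolding thrD_def by auto
  show ?case
  proof (cases "r \<le> m")
    case True
    then have m1: "1 \<le> m" unfolding r_def using r_facts[OF assms(1)] by simp
    define E where "E = (real m + 1) * NN n (Suc m) / real n"
    have teq: "real (t x) = F + (if x = 0 then E - F else 0) + (if x = m then E - F else 0)" if "x \<le> m" for x
    proof (cases "x = m \<or> x = 0")
      case True
      then have "real (t x) = E" unfolding t_def E_def using thr1 \<open>r \<le> m\<close> cw_ext[OF mn m1] by simp
      then show ?thesis using True m1 by auto
    next
      case False
      then show ?thesis unfolding t_def using thr1 t2 by auto
    qed
    have "(\<Sum>x\<le>m. real (t x)) = (\<Sum>x\<le>m. F + (if x = 0 then E - F else 0) + (if x = m then E - F else 0))"
      by (rule sum.cong) (use teq in auto)
    also have "\<dots> = (real m + 1) * F + 2 * (E - F)" by (rule sum_h[OF m1])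
    also have "\<dots> = ((real m + 1) * Bf n (Suc m) + 2 * ((real m + 1) / real n - Bf n (Suc m))) * NN n (Suc m)"
      unfolding E_def F_def by (simp add: algebra_simps)
    also have "\<dots> = ((real m + 1) * Bf n m) * NN n (Suc m)"
      using eq1[OF assms(1) _ mn] True unfolding r_def by simp
    also have "\<dots> = Bf n m * NN n m" using NN_Suc[OF mn] by simp
    finally show ?thesis using cnt r_def by simp
  next
    case False
    have "real (t x) = F" for x unfolding t_def using thr1 t2 False by simp
    then have "(\<Sum>x\<le>m. real (t x)) = (real m + 1) * F" by simp
    also have "\<dots> = Bf n m * NN n m"
      using NN_Suc[OF mn] False unfolding F_def Bf_def r_def by (simp add: max_def)
    finally show ?thesis using cnt r_def by simp
  qed
qed




definition rk :: "(nat \<Rightarrow> nat) \<Rightarrow> nat \<Rightarrow> nat" where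
  "rk \<sigma> i = card {j. j < i \<and> \<sigma> j < \<sigma> i}"

definition rcode :: "nat \<Rightarrow> (nat \<Rightarrow> nat) \<Rightarrow> nat list" where
  "rcode n \<sigma> = map (rk \<sigma>) [0..<n]"

lemma rank_cmp:
  assumes inj: "inj_on \<sigma> {..<Suc k}" and ik: "i < k"
  shows "\<sigma> i < \<sigma> k \<longleftrightarrow> card {j. j < k \<and> \<sigma> j < \<sigma> i} < rk \<sigma> k"
proof
  assume lt: "\<sigma> i < \<sigma> k"
  have "{j. j < k \<and> \<sigma> j < \<sigma> i} \<subset> {j. j < k \<and> \<sigma> j < \<sigma> k}"
    using lt ik by auto
  then show "card {j. j < k \<and> \<sigma> j < \<sigma> i} < rk \<sigma> k"
    unfolding rk_def by (rule psubset_card_mono[rotated]) simp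
next
  assume c: "card {j. j < k \<and> \<sigma> j < \<sigma> i} < rk \<sigma> k"
  show "\<sigma> i < \<sigma> k"
  proof (rule ccontr)
    assume "\<not> \<sigma> i < \<sigma> k"
    moreover have "\<sigma> i \<noteq> \<sigma> k" using inj ik by (auto dest: inj_onD)
    ultimately have gt: "\<sigma> k < \<sigma> i" by simp
    have "{j. j < k \<and> \<sigma> j < \<sigma> k} \<subseteq> {j. j < k \<and> \<sigma> j < \<sigma> i}" using gt by auto
    then have "rk \<sigma> k \<le> card {j. j < k \<and> \<sigma> j < \<sigma> i}"
      unfolding rk_def by (rule card_mono[rotated]) simp
    then show False using c by simp
  qed
qed

lemma order_det:
  assumes "inj_on \<sigma> {..<k}" "inj_on \<tau> {..<k}" "\<forall>i<k. rk \<sigma> i = rk \<tau> i"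
  shows "\<forall>i<k. \<forall>j<k. (\<sigma> i < \<sigma> j \<longleftrightarrow> \<tau> i < \<tau> j)"
  using assms
proof (induction k)
  case 0 then show ?case by simp
next
  case (Suc k)
  have injs: "inj_on \<sigma> {..<k}" "inj_on \<tau> {..<k}"
    using Suc.prems by (auto intro: inj_on_subset)
  have IH: "\<forall>i<k. \<forall>j<k. (\<sigma> i < \<sigma> j \<longleftrightarrow> \<tau> i < \<tau> j)"
    using Suc.IH[OF injs] Suc.prems(3) by simp
  have lowk: "\<sigma> i < \<sigma> k \<longleftrightarrow> \<tau> i < \<tau> k" if ik: "i < k" for i
  proof -
    have "{j. j < k \<and> \<sigma> j < \<sigma> i} = {j. j < k \<and> \<tau> j < \<tau> i}" using IH ik by auto
    moreover have "rk \<sigma> k = rk \<tau> k" using Suc.prems(3) by simp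
    ultimately show ?thesis
      using rank_cmp[OF Suc.prems(1) ik] rank_cmp[OF Suc.prems(2) ik] by simp
  qed
  have kup: "\<sigma> k < \<sigma> i \<longleftrightarrow> \<tau> k < \<tau> i" if ik: "i < k" for i
  proof -
    have "\<sigma> i \<noteq> \<sigma> k" "\<tau> i \<noteq> \<tau> k" using Suc.prems(1,2) ik by (auto dest: inj_onD)
    then show ?thesis using lowk[OF ik] by auto
  qed
  show ?case
  proof (intro allI impI)
    fix i j assume "i < Suc k" "j < Suc k"
    then consider "i < k" "j < k" | "i < k" "j = k" | "i = k" "j < k" | "i = k" "j = k" by linarith
    then show "\<sigma> i < \<sigma> j \<longleftrightarrow> \<tau> i < \<tau> j"
      by cases (use IH lowk kup in auto)
  qed
qed

lemma perm_props:
  assumes "\<sigma> permutes {..<n}"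
  shows "inj \<sigma>" "\<And>i. i < n \<Longrightarrow> \<sigma> i < n" "\<And>v. v < n \<Longrightarrow> \<exists>i<n. \<sigma> i = v"
proof -
  show "inj \<sigma>" using permutes_inj[OF assms] .
  show "\<And>i. i < n \<Longrightarrow> \<sigma> i < n" using permutes_in_image[OF assms] by simp
  show "\<And>v. v < n \<Longrightarrow> \<exists>i<n. \<sigma> i = v"
    using permutes_image[OF assms] by (metis imageE lessThan_iff)
qed

lemma take_code: "k \<le> n \<Longrightarrow> take k (rcode n \<sigma>) = rcode k \<sigma>"
  unfolding rcode_def by (simp add: take_map)

lemma rel_obs_eq:
  assumes "\<sigma> permutes {..<n}" "\<tau> permutes {..<n}" "k \<le> n" "take k (rcode n \<sigma>) = take k (rcode n \<tau>)"
  shows "rel_obs \<sigma> k = rel_obs \<tau> k"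
proof -
  have "rcode k \<sigma> = rcode k \<tau>" using assms(3,4) by (simp add: take_code)
  then have "\<forall>i<k. rk \<sigma> i = rk \<tau> i" unfolding rcode_def by (metis (no_types, lifting) add_0 diff_zero nth_map_upt)
  moreover have "inj_on \<sigma> {..<k}" "inj_on \<tau> {..<k}"
    using perm_props(1)[OF assms(1)] perm_props(1)[OF assms(2)] by (auto intro: inj_on_subset)
  ultimately have "\<forall>i<k. \<forall>j<k. (\<sigma> i < \<sigma> j \<longleftrightarrow> \<tau> i < \<tau> j)" using order_det by blast
  then show ?thesis unfolding rel_obs_def by (intro ext) auto
qed

lemma perm_val:
  assumes "\<sigma> permutes {..<n}" "i < n"
  shows "card {j. j < n \<and> \<sigma> j < \<sigma> i} = \<sigma> i"
proof -
  note pp = perm_props[OF assms(1)]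
  have "\<sigma> ` {j. j < n \<and> \<sigma> j < \<sigma> i} = {..<\<sigma> i}"
  proof (rule set_eqI)
    fix v show "v \<in> \<sigma> ` {j. j < n \<and> \<sigma> j < \<sigma> i} \<longleftrightarrow> v \<in> {..<\<sigma> i}"
      using pp(2)[OF assms(2)] pp(3)[of v] by auto
  qed
  moreover have "inj_on \<sigma> {j. j < n \<and> \<sigma> j < \<sigma> i}" using pp(1) by (auto intro: inj_on_subset)
  ultimately show ?thesis by (metis card_image card_lessThan)
qed

lemma rcode_inj: "inj_on (rcode n) {\<sigma>. \<sigma> permutes {..<n}}"
proof (rule inj_onI)
  fix \<sigma> \<tau> assume s: "\<sigma> \<in> {\<sigma>. \<sigma> permutes {..<n}}" and t: "\<tau> \<in> {\<sigma>. \<sigma> permutes {..<n}}"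
    and c: "rcode n \<sigma> = rcode n \<tau>"
  then have ps: "\<sigma> permutes {..<n}" "\<tau> permutes {..<n}" by auto
  have "\<forall>i<n. rk \<sigma> i = rk \<tau> i" using c unfolding rcode_def by (metis (no_types, lifting) add_0 diff_zero nth_map_upt)
  moreover have "inj_on \<sigma> {..<n}" "inj_on \<tau> {..<n}"
    using perm_props(1)[OF ps(1)] perm_props(1)[OF ps(2)] by (auto intro: inj_on_subset)
  ultimately have o: "\<forall>i<n. \<forall>j<n. (\<sigma> i < \<sigma> j \<longleftrightarrow> \<tau> i < \<tau> j)" using order_det by blast
  show "\<sigma> = \<tau>"
  proof (rule ext)
    fix i show "\<sigma> i = \<tau> i"
    proof (cases "i < n")
      case True
      have "{j. j < n \<and> \<sigma> j < \<sigma> i} = {j. j < n \<and> \<tau> j < \<tau> i}" using o True by auto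
      then show ?thesis using perm_val[OF ps(1) True] perm_val[OF ps(2) True] by simp
    next
      case False
      then show ?thesis using permutes_not_in[OF ps(1)] permutes_not_in[OF ps(2)] by simp
    qed
  qed
qed

lemma rk_le: "rk \<sigma> i \<le> i"
proof -
  have "{j. j < i \<and> \<sigma> j < \<sigma> i} \<subseteq> {..<i}" by auto
  then show ?thesis unfolding rk_def by (metis card_lessThan card_mono finite_lessThan)
qed

lemma rcode_LL: "rcode n \<sigma> \<in> LL n 0"
  unfolding LL_def rcode_def by (simp add: rk_le)

lemma fact_prod_Suc: "fact n = (\<Prod>j\<in>{0..<n}. Suc j)"
  by (induction n) (auto simp: prod.atLeast0_lessThan_Suc fact_Suc)

lemma rcode_img: "rcode n ` {\<sigma>. \<sigma> permutes {..<n}} = LL n 0"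
proof (rule card_subset_eq)
  show "finite (LL n 0)" by (rule finite_LL)
  show "rcode n ` {\<sigma>. \<sigma> permutes {..<n}} \<subseteq> LL n 0" using rcode_LL by auto
  have "card (rcode n ` {\<sigma>. \<sigma> permutes {..<n}}) = card {\<sigma>. \<sigma> permutes {..<n}}"
    by (rule card_image[OF rcode_inj])
  also have "\<dots> = fact n" by (rule card_permutations) auto
  also have "\<dots> = card (LL n 0)" using card_LL[of 0 n] fact_prod_Suc[of n] by simp
  finally show "card (rcode n ` {\<sigma>. \<sigma> permutes {..<n}}) = card (LL n 0)" .
qed




lemma rk_top:
  assumes "inj \<sigma>"
  shows "rk \<sigma> i = i \<longleftrightarrow> (\<forall>l<i. \<sigma> l < \<sigma> i)"
proof
  assume h: "rk \<sigma> i = i"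
  have sub: "{j. j < i \<and> \<sigma> j < \<sigma> i} \<subseteq> {..<i}" by auto
  have "{j. j < i \<and> \<sigma> j < \<sigma> i} = {..<i}"
    using card_subset_eq[OF finite_lessThan sub] h unfolding rk_def by simp
  then show "\<forall>l<i. \<sigma> l < \<sigma> i" by auto
next
  assume "\<forall>l<i. \<sigma> l < \<sigma> i"
  then have "{j. j < i \<and> \<sigma> j < \<sigma> i} = {..<i}" by auto
  then show "rk \<sigma> i = i" unfolding rk_def by simp
qed

lemma rk_bot:
  assumes "inj \<sigma>"
  shows "rk \<sigma> i = 0 \<longleftrightarrow> (\<forall>l<i. \<sigma> i < \<sigma> l)"
proof -
  have "rk \<sigma> i = 0 \<longleftrightarrow> {j. j < i \<and> \<sigma> j < \<sigma> i} = {}" unfolding rk_def by simp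
  also have "\<dots> \<longleftrightarrow> (\<forall>l<i. \<sigma> i < \<sigma> l)"
  proof -
    have ne: "\<sigma> l \<noteq> \<sigma> i" if "l < i" for l using assms that by (metis inj_eq less_irrefl)
    have "{j. j < i \<and> \<sigma> j < \<sigma> i} = {} \<longleftrightarrow> (\<forall>l<i. \<not> \<sigma> l < \<sigma> i)" by auto
    also have "\<dots> \<longleftrightarrow> (\<forall>l<i. \<sigma> i < \<sigma> l)"
    proof (intro iffI allI impI)
      fix l assume "\<forall>l<i. \<not> \<sigma> l < \<sigma> i" "l < i"
      then show "\<sigma> i < \<sigma> l" using ne[of l] by (metis linorder_neqE_nat)
    next
      fix l assume "\<forall>l<i. \<sigma> i < \<sigma> l" "l < i"
      then show "\<not> \<sigma> l < \<sigma> i" by (meson order_less_asym)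
    qed
    finally show ?thesis .
  qed
  finally show ?thesis .
qed

lemma max_char:
  fixes \<sigma> :: "nat \<Rightarrow> nat"
  assumes p: "\<sigma> permutes {..<n}" and i: "i < n"
  shows "\<sigma> i = n - 1 \<longleftrightarrow> (\<forall>l<i. \<sigma> l < \<sigma> i) \<and> (\<forall>q. i < q \<and> q < n \<longrightarrow> \<not> (\<forall>l<q. \<sigma> l < \<sigma> q))"
proof -
  note pp = perm_props[OF p]
  have top: "\<sigma> l < \<sigma> q" if "\<sigma> q = n - 1" "l < n" "l \<noteq> q" for l q
  proof -
    have "\<sigma> l \<noteq> \<sigma> q" using pp(1) that(3) by (metis inj_eq)
    then show ?thesis using pp(2)[OF that(2)] that(1) by (cases n) auto
  qed
  show ?thesis
  proof
    assume h: "\<sigma> i = n - 1"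
    have "\<forall>l<i. \<sigma> l < \<sigma> i" using top[OF h] i by auto
    moreover have "\<not> (\<forall>l<q. \<sigma> l < \<sigma> q)" if "i < q" "q < n" for q
    proof -
      have "\<sigma> q < n" using pp(2) that(2) by simp
      then have "\<not> \<sigma> i < \<sigma> q" using h by linarith
      then show ?thesis using that by auto
    qed
    ultimately show "(\<forall>l<i. \<sigma> l < \<sigma> i) \<and> (\<forall>q. i < q \<and> q < n \<longrightarrow> \<not> (\<forall>l<q. \<sigma> l < \<sigma> q))" by auto
  next
    assume h: "(\<forall>l<i. \<sigma> l < \<sigma> i) \<and> (\<forall>q. i < q \<and> q < n \<longrightarrow> \<not> (\<forall>l<q. \<sigma> l < \<sigma> q))"
    obtain q where q: "q < n" "\<sigma> q = n - 1" using pp(3)[of "n - 1"] i by auto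
    consider "q = i" | "q < i" | "i < q" by linarith
    then show "\<sigma> i = n - 1"
    proof cases
      case 1 then show ?thesis using q by simp
    next
      case 2
      then have "\<sigma> q < \<sigma> i" using h by auto
      then show ?thesis using q pp(2)[OF i] by linarith
    next
      case 3
      have "\<forall>l<q. \<sigma> l < \<sigma> q" using top[OF q(2)] q(1) by auto
      then show ?thesis using h 3 q(1) by auto
    qed
  qed
qed

lemma min_char:
  fixes \<sigma> :: "nat \<Rightarrow> nat"
  assumes p: "\<sigma> permutes {..<n}" and i: "i < n"
  shows "\<sigma> i = 0 \<longleftrightarrow> (\<forall>l<i. \<sigma> i < \<sigma> l) \<and> (\<forall>q. i < q \<and> q < n \<longrightarrow> \<not> (\<forall>l<q. \<sigma> q < \<sigma> l))"
proof -
  note pp = perm_props[OF p]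
  have bot: "\<sigma> q < \<sigma> l" if "\<sigma> q = 0" "l \<noteq> q" for l q
  proof -
    have "\<sigma> l \<noteq> \<sigma> q" using pp(1) that(2) by (metis inj_eq)
    then show ?thesis using that(1) by auto
  qed
  show ?thesis
  proof
    assume h: "\<sigma> i = 0"
    have "\<forall>l<i. \<sigma> i < \<sigma> l" using bot[OF h] by auto
    moreover have "\<not> (\<forall>l<q. \<sigma> q < \<sigma> l)" if "i < q" "q < n" for q
      using that h by auto
    ultimately show "(\<forall>l<i. \<sigma> i < \<sigma> l) \<and> (\<forall>q. i < q \<and> q < n \<longrightarrow> \<not> (\<forall>l<q. \<sigma> q < \<sigma> l))" by auto
  next
    assume h: "(\<forall>l<i. \<sigma> i < \<sigma> l) \<and> (\<forall>q. i < q \<and> q < n \<longrightarrow> \<not> (\<forall>l<q. \<sigma> q < \<sigma> l))"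
    obtain q where q: "q < n" "\<sigma> q = 0" using pp(3)[of 0] i by auto
    consider "q = i" | "q < i" | "i < q" by linarith
    then show "\<sigma> i = 0"
    proof cases
      case 1 then show ?thesis using q by simp
    next
      case 2
      then have "\<sigma> i < \<sigma> q" using h by auto
      then show ?thesis using q by linarith
    next
      case 3
      have "\<forall>l<q. \<sigma> q < \<sigma> l" using bot[OF q(2)] by auto
      then show ?thesis using h 3 q(1) by auto
    qed
  qed
qed

lemma rcode_nth: "i < n \<Longrightarrow> rcode n \<sigma> ! i = rk \<sigma> i"
  unfolding rcode_def by simp

lemma win_code:
  fixes \<sigma> :: "nat \<Rightarrow> nat"
  assumes p: "\<sigma> permutes {..<n}" and i: "i < n"
  shows "win i (rk \<sigma> i) (drop (Suc i) (rcode n \<sigma>)) \<longleftrightarrow> \<sigma> i = 0 \<or> \<sigma> i = n - 1"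
proof -
  have inj: "inj \<sigma>" using perm_props(1)[OF p] .
  let ?ys = "drop (Suc i) (rcode n \<sigma>)"
  have len: "length ?ys = n - Suc i" unfolding rcode_def by simp
  have nth: "?ys ! j = rk \<sigma> (Suc i + j)" if "j < n - Suc i" for j
    using that unfolding rcode_def by simp
  have A: "(\<forall>j<length ?ys. ?ys!j \<noteq> Suc i + j) \<longleftrightarrow> (\<forall>q. i < q \<and> q < n \<longrightarrow> rk \<sigma> q \<noteq> q)"
  proof
    assume h: "\<forall>j<length ?ys. ?ys!j \<noteq> Suc i + j"
    show "\<forall>q. i < q \<and> q < n \<longrightarrow> rk \<sigma> q \<noteq> q"
    proof (intro allI impI)
      fix q assume q: "i < q \<and> q < n"
      then have "q - Suc i < n - Suc i" by (simp add: diff_less_mono)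
      then have "q - Suc i < length ?ys" using len by simp
      then show "rk \<sigma> q \<noteq> q" using h nth[of "q - Suc i"] q len by auto
    qed
  next
    assume h: "\<forall>q. i < q \<and> q < n \<longrightarrow> rk \<sigma> q \<noteq> q"
    show "\<forall>j<length ?ys. ?ys!j \<noteq> Suc i + j"
      using h nth len by auto
  qed
  have B: "(\<forall>j<length ?ys. ?ys!j \<noteq> 0) \<longleftrightarrow> (\<forall>q. i < q \<and> q < n \<longrightarrow> rk \<sigma> q \<noteq> 0)"
  proof
    assume h: "\<forall>j<length ?ys. ?ys!j \<noteq> 0"
    show "\<forall>q. i < q \<and> q < n \<longrightarrow> rk \<sigma> q \<noteq> 0"
    proof (intro allI impI)
      fix q assume q: "i < q \<and> q < n"
      then have "q - Suc i < n - Suc i" by (simp add: diff_less_mono)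
      then have "q - Suc i < length ?ys" using len by simp
      then show "rk \<sigma> q \<noteq> 0" using h nth[of "q - Suc i"] q len by auto
    qed
  next
    assume h: "\<forall>q. i < q \<and> q < n \<longrightarrow> rk \<sigma> q \<noteq> 0"
    show "\<forall>j<length ?ys. ?ys!j \<noteq> 0"
      using h nth len by auto
  qed
  have "win i (rk \<sigma> i) ?ys \<longleftrightarrow> (rk \<sigma> i = i \<and> (\<forall>q. i < q \<and> q < n \<longrightarrow> rk \<sigma> q \<noteq> q)) \<or>
      (rk \<sigma> i = 0 \<and> (\<forall>q. i < q \<and> q < n \<longrightarrow> rk \<sigma> q \<noteq> 0))"
    unfolding win_def A B ..
  also have "\<dots> \<longleftrightarrow> \<sigma> i = n - 1 \<or> \<sigma> i = 0"
    unfolding max_char[OF p i] min_char[OF p i] rk_top[OF inj] rk_bot[OF inj] by blast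
  finally show ?thesis by blast
qed

lemma bsucc_char:
  "bsucc m D xs \<longleftrightarrow> (\<exists>i<length xs. D (take (Suc i) xs) \<and> (\<forall>i'<i. \<not> D (take (Suc i') xs)) \<and>
       win (m+i) (xs!i) (drop (Suc i) xs))"
proof (induction xs arbitrary: m D)
  case Nil then show ?case by simp
next
  case (Cons x xs)
  show ?case
  proof (cases "D [x]")
    case True
    then show ?thesis by (auto simp: Ex_less_Suc2)
  next
    case False
    have "bsucc m D (x#xs) = bsucc (Suc m) (\<lambda>ys. D (x#ys)) xs" using False by simp
    also have "\<dots> \<longleftrightarrow> (\<exists>i<length xs. D (x # take (Suc i) xs) \<and> (\<forall>i'<i. \<not> D (x # take (Suc i') xs)) \<and>
       win (Suc m+i) (xs!i) (drop (Suc i) xs))" by (rule Cons.IH)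
    also have "\<dots> \<longleftrightarrow> (\<exists>i<length (x#xs). D (take (Suc i) (x#xs)) \<and> (\<forall>i'<i. \<not> D (take (Suc i') (x#xs))) \<and>
       win (m+i) ((x#xs)!i) (drop (Suc i) (x#xs)))"
      using False by (simp add: Ex_less_Suc2 All_less_Suc2)
    finally show ?thesis .
  qed
qed




definition DS :: "nat \<Rightarrow> strategy \<Rightarrow> nat list \<Rightarrow> bool" where
  "DS n S p = S (length p) (rel_obs (SOME \<tau>. \<tau> permutes {..<n} \<and> take (length p) (rcode n \<tau>) = take (length p) p) (length p))"

lemma DS_take:
  assumes p: "\<sigma> permutes {..<n}" and k: "k \<le> n"
  shows "DS n S (take k (rcode n \<sigma>)) = S k (rel_obs \<sigma> k)"
proof -
  have len: "length (take k (rcode n \<sigma>)) = k" using k unfolding rcode_def by simp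
  define \<tau> where "\<tau> = (SOME \<tau>. \<tau> permutes {..<n} \<and> take k (rcode n \<tau>) = take k (take k (rcode n \<sigma>)))"
  have "\<tau> permutes {..<n} \<and> take k (rcode n \<tau>) = take k (take k (rcode n \<sigma>))"
    unfolding \<tau>_def by (rule someI[of _ \<sigma>]) (use p in simp)
  then have t: "\<tau> permutes {..<n}" "take k (rcode n \<tau>) = take k (rcode n \<sigma>)" by auto
  have "rel_obs \<tau> k = rel_obs \<sigma> k" by (rule rel_obs_eq[OF t(1) p k t(2)])
  then show ?thesis unfolding DS_def len \<tau>_def[symmetric] by simp
qed

lemma bsucc_code:
  fixes \<sigma> :: "nat \<Rightarrow> nat"
  assumes p: "\<sigma> permutes {..<n}"
  shows "bsucc 0 D (rcode n \<sigma>) \<longleftrightarrow> (\<exists>i<n. D (take (Suc i) (rcode n \<sigma>)) \<and> (\<forall>i'<i. \<not> D (take (Suc i') (rcode n \<sigma>))) \<and>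
      (\<sigma> i = 0 \<or> \<sigma> i = n - 1))"
proof -
  have len: "length (rcode n \<sigma>) = n" unfolding rcode_def by simp
  show ?thesis unfolding bsucc_char len
    using win_code[OF p] rcode_nth[of _ n \<sigma>] by (metis add_0)
qed

lemma bow_iff:
  fixes \<sigma> :: "nat \<Rightarrow> nat"
  assumes p: "\<sigma> permutes {..<n}"
  shows "bow_success n S \<sigma> \<longleftrightarrow> bsucc 0 (DS n S) (rcode n \<sigma>)"
proof -
  have ds: "DS n S (take (Suc i) (rcode n \<sigma>)) = S (Suc i) (rel_obs \<sigma> (Suc i))" if "i < n" for i
    using DS_take[OF p, of "Suc i"] that by simp
  have "bsucc 0 (DS n S) (rcode n \<sigma>) \<longleftrightarrow> (\<exists>i<n. S (Suc i) (rel_obs \<sigma> (Suc i)) \<and> (\<forall>i'<i. \<not> S (Suc i') (rel_obs \<sigma> (Suc i'))) \<and>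
      (\<sigma> i = 0 \<or> \<sigma> i = n - 1))"
    unfolding bsucc_code[OF p]
  proof (intro iffI; elim exE conjE)
    fix i assume "i < n" "DS n S (take (Suc i) (rcode n \<sigma>))" "\<forall>i'<i. \<not> DS n S (take (Suc i') (rcode n \<sigma>))" "\<sigma> i = 0 \<or> \<sigma> i = n - 1"
    then show "\<exists>i<n. S (Suc i) (rel_obs \<sigma> (Suc i)) \<and> (\<forall>i'<i. \<not> S (Suc i') (rel_obs \<sigma> (Suc i'))) \<and> (\<sigma> i = 0 \<or> \<sigma> i = n - 1)"
      using ds by (intro exI[of _ i]) auto
  next
    fix i assume "i < n" "S (Suc i) (rel_obs \<sigma> (Suc i))" "\<forall>i'<i. \<not> S (Suc i') (rel_obs \<sigma> (Suc i'))" "\<sigma> i = 0 \<or> \<sigma> i = n - 1"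
    then show "\<exists>i<n. DS n S (take (Suc i) (rcode n \<sigma>)) \<and> (\<forall>i'<i. \<not> DS n S (take (Suc i') (rcode n \<sigma>))) \<and> (\<sigma> i = 0 \<or> \<sigma> i = n - 1)"
      using ds by (intro exI[of _ i]) auto
  qed
  also have "\<dots> \<longleftrightarrow> bow_success n S \<sigma>"
    unfolding bow_success_def
  proof
    assume "\<exists>i<n. S (Suc i) (rel_obs \<sigma> (Suc i)) \<and> (\<forall>i'<i. \<not> S (Suc i') (rel_obs \<sigma> (Suc i'))) \<and> (\<sigma> i = 0 \<or> \<sigma> i = n - 1)"
    then obtain i where i: "i < n" "S (Suc i) (rel_obs \<sigma> (Suc i))" "\<forall>i'<i. \<not> S (Suc i') (rel_obs \<sigma> (Suc i'))" "\<sigma> i = 0 \<or> \<sigma> i = n - 1"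
      by blast
    have "\<forall>j\<in>{1..<Suc i}. \<not> S j (rel_obs \<sigma> j)"
    proof
      fix j assume "j \<in> {1..<Suc i}"
      then have "j = Suc (j - 1)" "j - 1 < i" by auto
      then show "\<not> S j (rel_obs \<sigma> j)" using i(3) by metis
    qed
    then show "\<exists>k\<in>{1..n}. S k (rel_obs \<sigma> k) \<and> (\<forall>j\<in>{1..<k}. \<not> S j (rel_obs \<sigma> j)) \<and> (\<sigma> (k - 1) = 0 \<or> \<sigma> (k - 1) = n - 1)"
      using i by (intro bexI[of _ "Suc i"]) auto
  next
    assume "\<exists>k\<in>{1..n}. S k (rel_obs \<sigma> k) \<and> (\<forall>j\<in>{1..<k}. \<not> S j (rel_obs \<sigma> j)) \<and> (\<sigma> (k - 1) = 0 \<or> \<sigma> (k - 1) = n - 1)"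
    then obtain k where k: "k \<in> {1..n}" "S k (rel_obs \<sigma> k)" "\<forall>j\<in>{1..<k}. \<not> S j (rel_obs \<sigma> j)" "\<sigma> (k - 1) = 0 \<or> \<sigma> (k - 1) = n - 1"
      by blast
    then have ks: "k = Suc (k - 1)" by auto
    have "\<forall>i'<k - 1. \<not> S (Suc i') (rel_obs \<sigma> (Suc i'))" using k(3) by auto
    then show "\<exists>i<n. S (Suc i) (rel_obs \<sigma> (Suc i)) \<and> (\<forall>i'<i. \<not> S (Suc i') (rel_obs \<sigma> (Suc i'))) \<and> (\<sigma> i = 0 \<or> \<sigma> i = n - 1)"
    proof (intro exI[of _ "k - 1"] conjI)
      show "k - 1 < n" using k(1) by auto
      show "S (Suc (k - 1)) (rel_obs \<sigma> (Suc (k - 1)))" using k(2) ks by metis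
    qed (use k(4) in auto)
  qed
  finally show ?thesis by simp
qed

lemma card_code:
  "card {\<sigma>. \<sigma> permutes {..<n} \<and> Q (rcode n \<sigma>)} = card {xs \<in> LL n 0. Q xs}"
proof -
  have "card {\<sigma>. \<sigma> permutes {..<n} \<and> Q (rcode n \<sigma>)} = card (rcode n ` {\<sigma>. \<sigma> permutes {..<n} \<and> Q (rcode n \<sigma>)})"
    by (rule card_image[symmetric]) (rule inj_on_subset[OF rcode_inj], auto)
  also have "rcode n ` {\<sigma>. \<sigma> permutes {..<n} \<and> Q (rcode n \<sigma>)} = {xs \<in> rcode n ` {\<sigma>. \<sigma> permutes {..<n}}. Q xs}"
    by auto
  finally show ?thesis unfolding rcode_img .
qed

lemma sp_eq:
  "success_prob n S = real (card {xs \<in> LL n 0. bsucc 0 (DS n S) xs}) / real (card (LL n 0))"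
proof -
  have "{\<sigma>. \<sigma> permutes {..<n} \<and> bow_success n S \<sigma>} = {\<sigma>. \<sigma> permutes {..<n} \<and> bsucc 0 (DS n S) (rcode n \<sigma>)}"
    using bow_iff by blast
  moreover have "card {\<sigma>. \<sigma> permutes {..<n}} = card (LL n 0)"
    using card_code[of n "\<lambda>_. True"] by simp
  ultimately show ?thesis unfolding success_prob_def using card_code by simp
qed

lemma thr_link:
  assumes "xs \<in> LL n 0"
  shows "bsucc 0 (DS n (threshold_strategy r)) xs \<longleftrightarrow> bsucc 0 (thrD r 0) xs"
proof -
  obtain \<sigma> where p: "\<sigma> permutes {..<n}" and xs: "xs = rcode n \<sigma>"
    using assms rcode_img by blast
  have inj: "inj \<sigma>" using perm_props(1)[OF p] .
  have eq: "DS n (threshold_strategy r) (take (Suc i) xs) = thrD r 0 (take (Suc i) xs)" if i: "i < n" for i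
  proof -
    have "DS n (threshold_strategy r) (take (Suc i) xs) = threshold_strategy r (Suc i) (rel_obs \<sigma> (Suc i))"
      using DS_take[OF p, of "Suc i"] i xs by simp
    also have "\<dots> = (r < Suc i \<and> ((\<forall>l<i. \<sigma> l < \<sigma> i) \<or> (\<forall>l<i. \<sigma> i < \<sigma> l)))"
      unfolding threshold_strategy_def rel_obs_def by auto
    also have "\<dots> = (r < Suc i \<and> (rk \<sigma> i = i \<or> rk \<sigma> i = 0))"
      using rk_top[OF inj] rk_bot[OF inj] by simp
    also have "\<dots> = thrD r 0 (take (Suc i) xs)"
    proof -
      have "length (take (Suc i) xs) = Suc i" "last (take (Suc i) xs) = rk \<sigma> i"
        using i xs rcode_nth[OF i, of \<sigma>] unfolding rcode_def by (auto simp: last_conv_nth)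
      then show ?thesis unfolding thrD_def by simp
    qed
    finally show ?thesis .
  qed
  have len: "length xs = n" using xs unfolding rcode_def by simp
  show ?thesis unfolding bsucc_char len using eq by (metis (no_types, lifting) order.strict_trans)
qed




theorem theorem1:
  fixes n :: nat
  assumes "n \<ge> 1"
  shows "\<exists>r. r \<le> n \<and> (\<forall>S. success_prob n S \<le> success_prob n (threshold_strategy r))"
proof -
  have N0: "0 < real (card (LL n 0))" using NN_pos[of 0 n] unfolding NN_def by simp
  have thr_set: "{xs \<in> LL n 0. bsucc 0 (DS n (threshold_strategy r)) xs} = {xs \<in> LL n 0. bsucc 0 (thrD r 0) xs}" for r
    using thr_link by blast
  show ?thesis
  proof (cases "n = 1")
    case True
    have all: "{xs \<in> LL n 0. bsucc 0 (thrD 0 0) xs} = LL n 0"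
    proof (rule set_eqI, rule iffI)
      fix xs assume "xs \<in> LL n 0"
      then have "length xs = 1" "xs ! 0 \<le> 0" using True unfolding LL_def by auto
      then have "xs = [0]" by (cases xs) auto
      moreover have "bsucc 0 (thrD 0 0) [0]" by (simp add: thrD_def win_def)
      ultimately show "xs \<in> {xs \<in> LL n 0. bsucc 0 (thrD 0 0) xs}" using \<open>xs \<in> LL n 0\<close> by simp
    qed simp
    have one: "success_prob n (threshold_strategy 0) = 1"
      unfolding sp_eq thr_set all using N0 by simp
    have le: "success_prob n S \<le> 1" for S
    proof -
      have "card {xs \<in> LL n 0. bsucc 0 (DS n S) xs} \<le> card (LL n 0)"
        by (rule card_mono[OF finite_LL]) auto
      then show ?thesis unfolding sp_eq using N0 by simp
    qed
    show ?thesis using one le by (intro exI[of _ 0]) auto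
  next
    case False
    then have n2: "2 \<le> n" using assms by simp
    have NN0: "NN n 0 > 0" using NN_pos by simp
    have thr: "success_prob n (threshold_strategy (n div 2)) = Bf n 0"
      unfolding sp_eq thr_set using tcount[OF n2, of 0] NN0 unfolding NN_def by simp
    have le: "success_prob n S \<le> Bf n 0" for S
    proof -
      have "real (card {xs \<in> LL n 0. bsucc 0 (DS n S) xs}) \<le> Bf n 0 * NN n 0"
        by (rule bound[OF n2]) simp
      then show ?thesis unfolding sp_eq using NN0 unfolding NN_def by (simp add: divide_le_eq)
    qed
    show ?thesis using thr le by (intro exI[of _ "n div 2"]) auto
  qed
qed


end
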